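(* Let $t\ge 1$ be an integer, let $\mathcal A$ be an alphabet, and let $\mathfrak D_t$ be the simple 2-level network $([2t,2t],[1,1])$, with an adversary able to corrupt up to $t$ of the edges outgoing from the source. Then, for every positive integer $i$, the $i$-shot capacity of $\mathfrak D_t$ (in Scenario A.1 as well as in Scenario A.2) is \[C_i(\mathfrak D_t,\mathcal A,\mathbf A_{\mathfrak D_t})=1.\]
   Context: An alphabet is a finite set $\mathcal A$ with $|\mathcal A|\ge 2$. For positive integers $a_j,b_j$, the simple 2-level network $([a_1,\dots,a_n],[b_1,\dots,b_n])$ is the directed acyclic multigraph with a source $S$, intermediate nodes $V_1,\dots,V_n$, a single terminal $T$, exactly $a_j$ parallel edges from $S$ to $V_j$ and exactly $b_j$ parallel edges from $V_j$ to $T$, and no other edges. Each edge carries one symbol of $\mathcal A$. A network code is a family $\mathcal F=\{\mathcal F_{V_j}:\mathcal A^{a_j}\to\mathcal A^{b_j}\}_j$. In one use, the source sends $x\in\mathcal A^{a_1+\dots+a_n}$ on its outgoing edges (the set $\mathcal U_S$), the adversary may replace the symbols on up to $t$ edges of $\mathcal U_S$ by arbitrary symbols, each $V_j$ applies $\mathcal F_{V_j}$ to the symbols it receives and sends the result to $T$. The fan-out set $\Omega_{\mathcal F}(x)$ is the set of all vectors $T$ can receive. For $i$ uses with the same network code, the input is $(x^1,\dots,x^i)$ and: in Scenario A.1 the adversary fixes one set $W\subseteq\mathcal U_S$ with $|W|\le t$ and in each of the $i$ rounds may alter (arbitrarily, independently per round) only symbols on edges of $W$; in Scenario A.2 the adversary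 may choose a different set of at most $t$ edges in each round, so the fan-out set is $\Omega_{\mathcal F}(x^1)\times\dots\times\Omega_{\mathcal F}(x^i)$. A nonempty code $C\subseteq(\mathcal A^{a_1+\dots+a_n})^i$ is unambiguous if distinct codewords have disjoint fan-out sets. The $i$-shot capacity $C_i$ is the maximum of $\log_{|\mathcal A|}(|C|)/i$ over all network codes and unambiguous codes $C$. *)

theory Defs
  imports Complex_Main
begin

text \<open>Simple 2-level network ([a_1..a_n],[b_1..b_n]) given by the lists as and bs
  (length as = length bs = n). A source input is a list of n blocks, block j being the
  list of symbols on the a_j parallel edges from S to V_j.\<close>

definition valid_input :: "'a set \<Rightarrow> nat list \<Rightarrow> 'a list list \<Rightarrow> bool" where
  "valid_input A as x \<longleftrightarrow> length x = length as \<and>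
     (\<forall>j<length as. length (x ! j) = as ! j \<and> set (x ! j) \<subseteq> A)"

definition source_edges :: "nat list \<Rightarrow> (nat \<times> nat) set" where
  "source_edges as = {(j, k). j < length as \<and> k < as ! j}"

definition network_code :: "'a set \<Rightarrow> nat list \<Rightarrow> nat list \<Rightarrow> (nat \<Rightarrow> 'a list \<Rightarrow> 'a list) \<Rightarrow> bool" where
  "network_code A as bs F \<longleftrightarrow> length as = length bs \<and>
     (\<forall>j<length as. \<forall>y. length y = as ! j \<and> set y \<subseteq> A \<longrightarrow>
        length (F j y) = bs ! j \<and> set (F j y) \<subseteq> A)"

definition agrees_off :: "nat list \<Rightarrow> (nat \<times> nat) set \<Rightarrow> 'a list list \<Rightarrow> 'a list list \<Rightarrow> bool" where
  "agrees_off as W x y \<longleftrightarrow> (\<forall>(j, k) \<in> source_edges as - W. y ! j ! k = x ! j ! k)"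

definition terminal_output :: "nat list \<Rightarrow> (nat \<Rightarrow> 'a list \<Rightarrow> 'a list) \<Rightarrow> 'a list list \<Rightarrow> 'a list list" where
  "terminal_output as F y = map (\<lambda>j. F j (y ! j)) [0..<length as]"

definition fanout :: "'a set \<Rightarrow> nat list \<Rightarrow> nat \<Rightarrow> (nat \<Rightarrow> 'a list \<Rightarrow> 'a list) \<Rightarrow> 'a list list \<Rightarrow> 'a list list set" where
  "fanout A as t F x = {terminal_output as F y | y W. valid_input A as y \<and>
      W \<subseteq> source_edges as \<and> card W \<le> t \<and> agrees_off as W x y}"

datatype scenario = A1 | A2

text \<open>i-shot fan-out set of (x^1,...,x^i), given as a list of length i.
  Scenario A.1: one fixed set W of at most t edges for all rounds.
  Scenario A.2: product of the one-shot fan-out sets.\<close>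
fun fanout_multi :: "scenario \<Rightarrow> 'a set \<Rightarrow> nat list \<Rightarrow> nat \<Rightarrow> (nat \<Rightarrow> 'a list \<Rightarrow> 'a list)
    \<Rightarrow> 'a list list list \<Rightarrow> 'a list list list set" where
  "fanout_multi A1 A as t F xs = {map (terminal_output as F) ys | ys W.
      length ys = length xs \<and> W \<subseteq> source_edges as \<and> card W \<le> t \<and>
      (\<forall>r<length xs. valid_input A as (ys ! r) \<and> agrees_off as W (xs ! r) (ys ! r))}"
| "fanout_multi A2 A as t F xs = {zs. length zs = length xs \<and>
      (\<forall>r<length xs. zs ! r \<in> fanout A as t F (xs ! r))}"

definition unambiguous :: "scenario \<Rightarrow> 'a set \<Rightarrow> nat list \<Rightarrow> nat \<Rightarrow> nat \<Rightarrow> (nat \<Rightarrow> 'a list \<Rightarrow> 'a list)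
    \<Rightarrow> 'a list list list set \<Rightarrow> bool" where
  "unambiguous sc A as t i F C \<longleftrightarrow> C \<noteq> {} \<and>
     (\<forall>xs\<in>C. length xs = i \<and> (\<forall>r<i. valid_input A as (xs ! r))) \<and>
     (\<forall>xs\<in>C. \<forall>xs'\<in>C. xs \<noteq> xs' \<longrightarrow>
        fanout_multi sc A as t F xs \<inter> fanout_multi sc A as t F xs' = {})"

definition capacity :: "scenario \<Rightarrow> 'a set \<Rightarrow> nat list \<Rightarrow> nat list \<Rightarrow> nat \<Rightarrow> nat \<Rightarrow> real" where
  "capacity sc A as bs t i = Sup {log (real (card A)) (real (card C)) / real i | F C.
      network_code A as bs F \<and> unambiguous sc A as t i F C}"

end

theory Submission
  imports Defs
begin

lemma all2: "(\<forall>j<Suc (Suc 0). P j) \<longleftrightarrow> P 0 \<and> P (Suc 0)"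
  by (auto simp: less_Suc_eq)
lemma valid_input_2:
  "valid_input A [a, b] x \<longleftrightarrow> length x = 2 \<and> length (x!0) = a \<and> set (x!0) \<subseteq> A
     \<and> length (x!1) = b \<and> set (x!1) \<subseteq> A"
  unfolding valid_input_def by (simp add: all2 numeral_2_eq_2)

lemma network_code_2:
  "network_code A [a, a'] [b, b'] F \<longleftrightarrow>
     (\<forall>y. length y = a \<and> set y \<subseteq> A \<longrightarrow> length (F 0 y) = b \<and> set (F 0 y) \<subseteq> A) \<and>
     (\<forall>y. length y = a' \<and> set y \<subseteq> A \<longrightarrow> length (F 1 y) = b' \<and> set (F 1 y) \<subseteq> A)"
  unfolding network_code_def by (simp add: all2 numeral_2_eq_2)

lemma source_edges_2:
  "source_edges [a, b] = {(j, k). (j = 0 \<and> k < a) \<or> (j = 1 \<and> k < b)}"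
  unfolding source_edges_def by (auto simp: less_Suc_eq)
lemma terminal_output_2:
  "terminal_output [a, b] F y = [F 0 (y!0), F 1 (y!1)]"
  by (simp add: terminal_output_def upt_rec)

lemma len1_eq: "length u = 1 \<Longrightarrow> length v = 1 \<Longrightarrow> hd u = hd v \<Longrightarrow> u = v"
  by (cases u; cases v) auto

lemma upper:
  assumes nc: "network_code A [2*t, 2*t] [1, 1] F"
    and un: "unambiguous A1 A [2*t, 2*t] t i F C" and fin: "finite A"
  shows "finite C \<and> card C \<le> card A ^ i"
proof -
  define h where "h xs = map (\<lambda>x. hd (F 1 (x!1))) xs" for xs :: "'a list list list"
  have Fout: "\<And>y. length y = 2*t \<Longrightarrow> set y \<subseteq> A \<Longrightarrow> length (F 1 y) = 1 \<and> set (F 1 y) \<subseteq> A"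
    using nc unfolding network_code_2 by blast
  have lenC: "\<And>xs. xs \<in> C \<Longrightarrow> length xs = i" using un unfolding unambiguous_def by blast
  have valid: "\<And>xs r. xs \<in> C \<Longrightarrow> r < i \<Longrightarrow> length (xs!r) = 2 \<and> length (xs!r!0) = 2*t
      \<and> set (xs!r!0) \<subseteq> A \<and> length (xs!r!1) = 2*t \<and> set (xs!r!1) \<subseteq> A"
    using un unfolding unambiguous_def valid_input_2 by blast
  have disj: "\<And>xs xs'. xs \<in> C \<Longrightarrow> xs' \<in> C \<Longrightarrow> xs \<noteq> xs' \<Longrightarrow>
      fanout_multi A1 A [2*t, 2*t] t F xs \<inter> fanout_multi A1 A [2*t, 2*t] t F xs' = {}"
    using un unfolding unambiguous_def by blast
  have img: "h ` C \<subseteq> {ws. set ws \<subseteq> A \<and> length ws = i}"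
  proof
    fix ws assume "ws \<in> h ` C"
    then obtain xs where xs: "xs \<in> C" "ws = h xs" by blast
    have "set ws \<subseteq> A"
    proof
      fix w assume "w \<in> set ws"
      then obtain r where r: "r < i" "w = hd (F 1 (xs!r!1))"
        using xs lenC unfolding h_def by (auto simp: in_set_conv_nth)
      have "length (F 1 (xs!r!1)) = 1 \<and> set (F 1 (xs!r!1)) \<subseteq> A"
        using Fout valid[OF xs(1) r(1)] by blast
      then show "w \<in> A" using r(2) by (cases "F 1 (xs!r!1)") auto
    qed
    then show "ws \<in> {ws. set ws \<subseteq> A \<and> length ws = i}" using xs lenC h_def by simp
  qed
  have inj: "inj_on h C"
  proof (rule inj_onI, rule ccontr)
    fix xs xs' assume xs: "xs \<in> C" and xs': "xs' \<in> C" and heq: "h xs = h xs'" and ne: "xs \<noteq> xs'"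
    have li: "length xs = i" "length xs' = i" using lenC xs xs' by auto
    have F1eq: "F 1 (xs!r!1) = F 1 (xs'!r!1)" if r: "r < i" for r
    proof -
      have "h xs ! r = h xs' ! r" using heq by simp
      then have "hd (F 1 (xs!r!1)) = hd (F 1 (xs'!r!1))" using li r unfolding h_def by simp
      then show ?thesis using len1_eq Fout valid[OF xs r] valid[OF xs' r] by blast
    qed
    define z where "z r = take t (xs'!r!0) @ drop t (xs!r!0)" for r
    define ys where "ys = map (\<lambda>r. [z r, xs!r!1]) [0..<i]"
    define ys' where "ys' = map (\<lambda>r. [z r, xs'!r!1]) [0..<i]"
    define W :: "(nat \<times> nat) set" where "W = Pair 0 ` {..<t}"
    define W' :: "(nat \<times> nat) set" where "W' = Pair 0 ` {t..<2*t}"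
    have cW: "card W \<le> t" "card W' \<le> t" unfolding W_def W'_def
      by (simp_all add: card_image inj_on_def)
    have sW: "W \<subseteq> source_edges [2*t, 2*t]" "W' \<subseteq> source_edges [2*t, 2*t]"
      unfolding W_def W'_def source_edges_2 by auto
    have zlen: "length (z r) = 2*t \<and> set (z r) \<subseteq> A" if r: "r < i" for r
      using valid[OF xs r] valid[OF xs' r] set_take_subset[of t "xs'!r!0"] set_drop_subset[of t "xs!r!0"]
      unfolding z_def by auto
    have m1: "map (terminal_output [2*t, 2*t] F) ys \<in> fanout_multi A1 A [2*t, 2*t] t F xs"
    proof -
      have "\<forall>r<length xs. valid_input A [2*t, 2*t] (ys ! r) \<and> agrees_off [2*t, 2*t] W (xs ! r) (ys ! r)"
      proof (intro allI impI conjI)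
        fix r assume "r < length xs"
        then have r: "r < i" using li by simp
        show "valid_input A [2*t, 2*t] (ys ! r)" using r zlen[OF r] valid[OF xs r]
          unfolding valid_input_2 ys_def by simp
        show "agrees_off [2*t, 2*t] W (xs ! r) (ys ! r)"
          unfolding agrees_off_def source_edges_2 W_def
          using r valid[OF xs r] valid[OF xs' r] by (auto simp: ys_def z_def nth_append min_def)
      qed
      then show ?thesis unfolding fanout_multi.simps
        apply (intro CollectI exI[of _ ys] exI[of _ W])
        using li cW sW by (simp add: ys_def)
    qed
    have m2: "map (terminal_output [2*t, 2*t] F) ys' \<in> fanout_multi A1 A [2*t, 2*t] t F xs'"
    proof -
      have "\<forall>r<length xs'. valid_input A [2*t, 2*t] (ys' ! r) \<and> agrees_off [2*t, 2*t] W' (xs' ! r) (ys' ! r)"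
      proof (intro allI impI conjI)
        fix r assume "r < length xs'"
        then have r: "r < i" using li by simp
        show "valid_input A [2*t, 2*t] (ys' ! r)" using r zlen[OF r] valid[OF xs' r]
          unfolding valid_input_2 ys'_def by simp
        show "agrees_off [2*t, 2*t] W' (xs' ! r) (ys' ! r)"
          unfolding agrees_off_def source_edges_2 W'_def
          using r valid[OF xs r] valid[OF xs' r] by (auto simp: ys'_def z_def nth_append min_def)
      qed
      then show ?thesis unfolding fanout_multi.simps
        apply (intro CollectI exI[of _ ys'] exI[of _ W'])
        using li cW sW by (simp add: ys'_def)
    qed
    have "map (terminal_output [2*t, 2*t] F) ys = map (terminal_output [2*t, 2*t] F) ys'"
      unfolding ys_def ys'_def using F1eq by (auto simp: terminal_output_2)
    then show False using m1 m2 disj[OF xs xs' ne] by auto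
  qed
  have fin2: "finite {ws. set ws \<subseteq> A \<and> length ws = i}"
    using finite_lists_length_eq[OF fin] by simp
  have "finite C" using inj_on_finite[OF inj img fin2] .
  moreover have "card C \<le> card A ^ i"
    using card_inj_on_le[OF inj img fin2] card_lists_length_eq[OF fin] by simp
  ultimately show ?thesis by blast
qed



definition cnt :: "'a list \<Rightarrow> 'a \<Rightarrow> nat" where "cnt y a = length (filter (\<lambda>z. z = a) y)"
definition cand :: "nat \<Rightarrow> 'a list \<Rightarrow> 'a set" where "cand t y = {a \<in> set y. t \<le> cnt y a}"
definition outp :: "'a set \<Rightarrow> ('a \<Rightarrow> nat) \<Rightarrow> nat \<Rightarrow> 'a list \<Rightarrow> 'a" where
  "outp A rk t y = (if cand t y = {} then (SOME a. a \<in> A) else arg_min_on rk (cand t y))"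
definition Fc :: "'a set \<Rightarrow> ('a \<Rightarrow> nat) \<Rightarrow> nat \<Rightarrow> nat \<Rightarrow> 'a list \<Rightarrow> 'a list" where
  "Fc A rk t j y = [outp A rk t y]"
definition code :: "nat \<Rightarrow> 'a \<Rightarrow> 'a list list" where
  "code t a = [replicate (2*t) a, replicate (2*t) a]"

lemma cnt_two: "a \<noteq> b \<Longrightarrow> cnt y a + cnt y b \<le> length y"
  unfolding cnt_def by (induct y) auto

lemma cnt_pos: "0 < cnt y a \<Longrightarrow> a \<in> set y"
  unfolding cnt_def by (induct y) (auto split: if_splits)

lemma cand_fin: "finite (cand t y)" unfolding cand_def by simp

lemma outp_in: "set y \<subseteq> A \<Longrightarrow> A \<noteq> {} \<Longrightarrow> outp A rk t y \<in> A"
proof -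
  assume a: "set y \<subseteq> A" "A \<noteq> {}"
  show ?thesis
  proof (cases "cand t y = {}")
    case True
    have "(SOME a. a \<in> A) \<in> A" using a(2) by (simp add: some_in_eq)
    then show ?thesis using True unfolding outp_def by simp
  next
    case False
    have "arg_min_on rk (cand t y) \<in> cand t y" by (rule arg_min_if_finite(1)[OF cand_fin False])
    then have m: "arg_min_on rk (cand t y) \<in> set y" unfolding cand_def by blast
    have "outp A rk t y = arg_min_on rk (cand t y)" using False by (simp add: outp_def)
    with m a(1) show ?thesis by auto
  qed
qed

lemma outp_le: "t \<le> cnt y a \<Longrightarrow> 0 < t \<Longrightarrow> rk (outp A rk t y) \<le> rk a"
proof -
  assume a: "t \<le> cnt y a" "0 < t"
  then have "a \<in> set y" using cnt_pos[of y a] by simp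
  then have ac: "a \<in> cand t y" unfolding cand_def using a by simp
  then have ne: "cand t y \<noteq> {}" by blast
  have nn: "\<not> (\<exists>x\<in>cand t y. rk x < rk (arg_min_on rk (cand t y)))"
    by (rule arg_min_if_finite(2)[OF cand_fin ne])
  have "\<not> rk a < rk (arg_min_on rk (cand t y))"
  proof
    assume h: "rk a < rk (arg_min_on rk (cand t y))"
    have "\<exists>x\<in>cand t y. rk x < rk (arg_min_on rk (cand t y))" using h ac by (intro bexI[where x=a])
    with nn show False by contradiction
  qed
  moreover have "outp A rk t y = arg_min_on rk (cand t y)" using ne by (simp add: outp_def)
  ultimately show ?thesis by simp
qed

lemma outp_eq: "length y = 2*t \<Longrightarrow> t < cnt y a \<Longrightarrow> outp A rk t y = a"
proof -
  assume a: "length y = 2*t" "t < cnt y a"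
  have "cand t y = {a}"
  proof
    have "a \<in> set y" using a cnt_pos[of y a] by simp
    then show "{a} \<subseteq> cand t y" using a unfolding cand_def by simp
    show "cand t y \<subseteq> {a}"
    proof
      fix b assume "b \<in> cand t y"
      then have "t \<le> cnt y b" unfolding cand_def by blast
      show "b \<in> {a}"
      proof (rule ccontr)
        assume "b \<notin> {a}"
        then have "a \<noteq> b" by simp
        from cnt_two[OF this, of y] a \<open>t \<le> cnt y b\<close> show False by linarith
      qed
    qed
  qed
  moreover have "arg_min_on rk {a} \<in> {a}" by (rule arg_min_if_finite(1)) simp_all
  ultimately show ?thesis unfolding outp_def by simp
qed

lemma cnt_lower:
  assumes "finite V" "length z = 2*t" "\<forall>k<2*t. k \<notin> V \<longrightarrow> z!k = a"
  shows "2*t - card V \<le> cnt z a"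
proof -
  have "2*t - card V \<le> card ({..<2*t} - V)" using diff_card_le_card_Diff[OF assms(1), of "{..<2*t}"] by simp
  also have "\<dots> \<le> card {k. k < length z \<and> z!k = a}"
  proof (rule card_mono)
    show "finite {k. k < length z \<and> z!k = a}" by (rule finite_subset[of _ "{..<length z}"]) auto
    show "{..<2*t} - V \<subseteq> {k. k < length z \<and> z!k = a}" using assms(2,3) by auto
  qed
  also have "\<dots> = cnt z a" unfolding cnt_def by (simp add: length_filter_conv_card)
  finally show ?thesis .
qed

lemma fin_se: "finite (source_edges [a, b])"
proof -
  have "source_edges [a, b] \<subseteq> {..<2::nat} \<times> {..<max a b}" unfolding source_edges_2 by auto
  then show ?thesis by (rule finite_subset) simp
qed

lemma fan1:
  assumes aA: "a \<in> A" and t: "1 \<le> t" and zs: "zs \<in> fanout A [2*t, 2*t] t (Fc A rk t) (code t a)"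
  shows "\<exists>u v. zs = [[u],[v]] \<and> ((u = a \<and> rk v \<le> rk a) \<or> (v = a \<and> rk u \<le> rk a))"
proof -
  obtain y W where zy: "zs = terminal_output [2*t, 2*t] (Fc A rk t) y" and vy: "valid_input A [2*t, 2*t] y"
    and sW: "W \<subseteq> source_edges [2*t, 2*t]" and cW: "card W \<le> t" and ag: "agrees_off [2*t, 2*t] W (code t a) y"
    using zs unfolding fanout_def by blast
  have finW: "finite W" using finite_subset[OF sW fin_se] .
  define W0 where "W0 = {k. (0::nat, k) \<in> W}"
  define W1 where "W1 = {k. (1::nat, k) \<in> W}"
  have s0: "W0 \<subseteq> {..<2*t}" "W1 \<subseteq> {..<2*t}" using sW unfolding W0_def W1_def source_edges_2 by auto
  have f0: "finite W0" "finite W1" using s0 finite_subset by auto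
  have "card W0 + card W1 = card (Pair (0::nat) ` W0 \<union> Pair (1::nat) ` W1)"
    by (subst card_Un_disjoint) (auto simp: f0 card_image inj_on_def)
  also have "\<dots> \<le> card W" by (rule card_mono[OF finW]) (auto simp: W0_def W1_def)
  finally have cs: "card W0 + card W1 \<le> t" using cW by simp
  have ly: "length (y!0) = 2*t" "length (y!1) = 2*t" using vy unfolding valid_input_2 by auto
  have ag0: "\<forall>k<2*t. k \<notin> W0 \<longrightarrow> y!0!k = a"
  proof (intro allI impI)
    fix k assume k: "k < 2*t" "k \<notin> W0"
    have "(0::nat, k) \<in> source_edges [2*t, 2*t] - W" using k unfolding source_edges_2 W0_def by simp
    then have "y!0!k = code t a ! 0 ! k" using bspec[OF ag[unfolded agrees_off_def]] by fastforce
    then show "y!0!k = a" using k by (simp add: code_def)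
  qed
  have ag1: "\<forall>k<2*t. k \<notin> W1 \<longrightarrow> y!1!k = a"
  proof (intro allI impI)
    fix k assume k: "k < 2*t" "k \<notin> W1"
    have "(1::nat, k) \<in> source_edges [2*t, 2*t] - W" using k unfolding source_edges_2 W1_def by simp
    then have "y!1!k = code t a ! 1 ! k" using bspec[OF ag[unfolded agrees_off_def]] by fastforce
    then show "y!1!k = a" using k by (simp add: code_def)
  qed
  have c0: "2*t - card W0 \<le> cnt (y!0) a" using cnt_lower[OF f0(1) ly(1) ag0] .
  have c1: "2*t - card W1 \<le> cnt (y!1) a" using cnt_lower[OF f0(2) ly(2) ag1] .
  have zs2: "zs = [[outp A rk t (y!0)], [outp A rk t (y!1)]]"
    unfolding zy terminal_output_2 Fc_def by simp
  show ?thesis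
  proof (cases "card W0 < t")
    case True
    then have "outp A rk t (y!0) = a" using outp_eq[OF ly(1)] c0 by simp
    moreover have "rk (outp A rk t (y!1)) \<le> rk a" using outp_le[of t "y!1" a] c1 cs t by simp
    ultimately show ?thesis using zs2 by blast
  next
    case False
    then have "outp A rk t (y!1) = a" using outp_eq[OF ly(2)] c1 cs t by simp
    moreover have "rk (outp A rk t (y!0)) \<le> rk a" using outp_le[of t "y!0" a] c0 cs t by simp
    ultimately show ?thesis using zs2 by blast
  qed
qed

lemma fm_sub: "fanout_multi A1 A as t F xs \<subseteq> fanout_multi A2 A as t F xs"
proof
  fix zs assume "zs \<in> fanout_multi A1 A as t F xs"
  then obtain ys W where z: "zs = map (terminal_output as F) ys" and l: "length ys = length xs"
    and W: "W \<subseteq> source_edges as" "card W \<le> t"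
    and v: "\<forall>r<length xs. valid_input A as (ys ! r) \<and> agrees_off as W (xs ! r) (ys ! r)" by auto
  have "zs ! r \<in> fanout A as t F (xs ! r)" if r: "r < length xs" for r
    unfolding fanout_def
    apply (intro CollectI exI[of _ "ys!r"] exI[of _ W])
    using r z l W v by simp
  then show "zs \<in> fanout_multi A2 A as t F xs" using z l by simp
qed

lemma unamb_mono: "unambiguous A2 A as t i F C \<Longrightarrow> unambiguous A1 A as t i F C"
  unfolding unambiguous_def using fm_sub by blast



lemma rep_sub: "a \<in> A \<Longrightarrow> set (replicate n a) \<subseteq> A" by (induct n) auto

lemma lower:
  assumes fin: "finite A" and ne: "A \<noteq> {}" and inj: "inj_on rk A" and t: "1 \<le> t"
  shows "unambiguous A2 A [2*t, 2*t] t i (Fc A rk t) (map (code t) ` {ws. set ws \<subseteq> A \<and> length ws = i})"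
    and "card (map (code t) ` {ws. set ws \<subseteq> A \<and> length ws = i}) = card A ^ i"
    and "network_code A [2*t, 2*t] [1, 1] (Fc A rk t)"
proof -
  let ?L = "{ws. set ws \<subseteq> A \<and> length ws = i}"
  let ?C = "map (code t) ` ?L"
  have injc: "inj (code t)"
  proof (rule injI)
    fix a b assume "code t a = code t b"
    then have "hd (hd (code t a)) = hd (hd (code t b))" by simp
    then show "a = b" using t by (simp add: code_def hd_replicate)
  qed
  have injm: "inj_on (map (code t)) ?L"
    unfolding inj_on_def using inj_map_eq_map[OF injc] by blast
  show "card ?C = card A ^ i" using card_image[OF injm] card_lists_length_eq[OF fin] by simp
  show "network_code A [2*t, 2*t] [1, 1] (Fc A rk t)"
    unfolding network_code_2 Fc_def using outp_in[OF _ ne] by simp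
  have cne: "?C \<noteq> {}"
  proof -
    obtain a where "a \<in> A" using ne by blast
    then have "set (replicate i a) \<subseteq> A" by (cases i) auto
    then have "replicate i a \<in> ?L" by simp
    then show ?thesis by blast
  qed
  have cval: "\<forall>xs\<in>?C. length xs = i \<and> (\<forall>r<i. valid_input A [2*t, 2*t] (xs ! r))"
  proof
    fix xs assume "xs \<in> ?C"
    then obtain ws where ws: "ws \<in> ?L" "xs = map (code t) ws" by blast
    have "valid_input A [2*t, 2*t] (xs ! r)" if r: "r < i" for r
    proof -
      have "ws ! r \<in> A" using ws r nth_mem by blast
      then show ?thesis using ws r unfolding valid_input_2 code_def by (simp add: rep_sub)
    qed
    then show "length xs = i \<and> (\<forall>r<i. valid_input A [2*t, 2*t] (xs ! r))" using ws by simp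
  qed
  have cdis: "\<forall>xs\<in>?C. \<forall>xs'\<in>?C. xs \<noteq> xs' \<longrightarrow>
      fanout_multi A2 A [2*t, 2*t] t (Fc A rk t) xs \<inter> fanout_multi A2 A [2*t, 2*t] t (Fc A rk t) xs' = {}"
  proof (intro ballI impI)
    fix xs xs' assume xs: "xs \<in> ?C" and xs': "xs' \<in> ?C" and nexs: "xs \<noteq> xs'"
    obtain ws where ws: "ws \<in> ?L" "xs = map (code t) ws" using xs by blast
    obtain ws' where ws': "ws' \<in> ?L" "xs' = map (code t) ws'" using xs' by blast
    obtain r where r: "r < i" "ws ! r \<noteq> ws' ! r"
    proof (rule ccontr)
      assume "\<not> thesis"
      then have "\<forall>r<i. ws ! r = ws' ! r" using that by blast
      then have "ws = ws'" using ws(1) ws'(1) by (intro nth_equalityI) auto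
      then show False using nexs ws ws' by simp
    qed
    have sw: "set ws \<subseteq> A" "length ws = i" "set ws' \<subseteq> A" "length ws' = i" using ws(1) ws'(1) by simp_all
    have "ws ! r \<in> set ws" "ws' ! r \<in> set ws'" using sw r(1) by simp_all
    then have a: "ws ! r \<in> A" "ws' ! r \<in> A" using sw by auto
    show "fanout_multi A2 A [2*t, 2*t] t (Fc A rk t) xs \<inter> fanout_multi A2 A [2*t, 2*t] t (Fc A rk t) xs' = {}"
    proof (rule ccontr)
      assume "\<not> ?thesis"
      then obtain zs where z1: "zs \<in> fanout_multi A2 A [2*t, 2*t] t (Fc A rk t) xs"
        and z2: "zs \<in> fanout_multi A2 A [2*t, 2*t] t (Fc A rk t) xs'" by blast
      have "zs ! r \<in> fanout A [2*t, 2*t] t (Fc A rk t) (code t (ws ! r))"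
      proof -
        have l: "length xs = i" "xs ! r = code t (ws ! r)" using ws r by simp_all
        have "zs ! r \<in> fanout A [2*t, 2*t] t (Fc A rk t) (xs ! r)"
          using z1 r l(1) unfolding fanout_multi.simps by blast
        then show ?thesis using l(2) by simp
      qed
      from fan1[OF a(1) t this] obtain u v where
        uv: "zs ! r = [[u],[v]]" "(u = ws ! r \<and> rk v \<le> rk (ws ! r)) \<or> (v = ws ! r \<and> rk u \<le> rk (ws ! r))"
        by blast
      have "zs ! r \<in> fanout A [2*t, 2*t] t (Fc A rk t) (code t (ws' ! r))"
      proof -
        have l: "length xs' = i" "xs' ! r = code t (ws' ! r)" using ws' r by simp_all
        have "zs ! r \<in> fanout A [2*t, 2*t] t (Fc A rk t) (xs' ! r)"
          using z2 r l(1) unfolding fanout_multi.simps by blast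
        then show ?thesis using l(2) by simp
      qed
      from fan1[OF a(2) t this] obtain u' v' where
        uv': "zs ! r = [[u'],[v']]" "(u' = ws' ! r \<and> rk v' \<le> rk (ws' ! r)) \<or> (v' = ws' ! r \<and> rk u' \<le> rk (ws' ! r))"
        by blast
      have "u = u'" "v = v'" using uv(1) uv'(1) by auto
      then have "rk (ws ! r) = rk (ws' ! r)" using uv(2) uv'(2) r(2) \<open>u = u'\<close> \<open>v = v'\<close> by auto
      then show False using inj_onD[OF inj _ a] r(2) by blast
    qed
  qed
  show "unambiguous A2 A [2*t, 2*t] t i (Fc A rk t) ?C"
    unfolding unambiguous_def by (intro conjI cne cval cdis)
qed



lemma sc_A1: "unambiguous sc A as t i F C \<Longrightarrow> unambiguous A1 A as t i F C"
  by (cases sc) (auto intro: unamb_mono)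

lemma cap_one:
  fixes A :: "'a set" and t i :: nat
  assumes t: "t \<ge> 1" and fin: "finite A" and cA: "card A \<ge> 2" and i: "i \<ge> 1"
  shows "capacity sc A [2 * t, 2 * t] [1, 1] t i = 1"
proof -
  obtain rk :: "'a \<Rightarrow> nat" and n where rk: "rk ` A = {i. i < n}" "inj_on rk A"
    using finite_imp_inj_to_nat_seg[OF fin] by blast
  have ne: "A \<noteq> {}" using cA by auto
  define X where "X = {log (real (card A)) (real (card C)) / real i | F C.
      network_code A [2 * t, 2 * t] [1, 1] F \<and> unambiguous sc A [2 * t, 2 * t] t i F C}"
  have b: "1 < real (card A)" using cA by simp
  let ?C = "map (code t) ` {ws. set ws \<subseteq> A \<and> length ws = i}"
  have L: "unambiguous A2 A [2*t, 2*t] t i (Fc A rk t) ?C" "card ?C = card A ^ i"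
    "network_code A [2*t, 2*t] [1, 1] (Fc A rk t)"
    using lower[OF fin ne rk(2) t] by blast+
  have Lsc: "unambiguous sc A [2*t, 2*t] t i (Fc A rk t) ?C"
    using L(1) unamb_mono by (cases sc) auto
  have val: "log (real (card A)) (real (card A ^ i)) / real i = 1"
  proof -
    have "log (real (card A)) (real (card A ^ i)) = real i * log (real (card A)) (real (card A))"
      by (simp add: log_nat_power)
    also have "\<dots> = real i" using b by simp
    finally show ?thesis using i by simp
  qed
  have one: "1 \<in> X"
    unfolding X_def using L(2,3) Lsc val by (metis (mono_tags, lifting) mem_Collect_eq)
  have le: "x \<le> 1" if x: "x \<in> X" for x
  proof -
    obtain F C where F: "network_code A [2 * t, 2 * t] [1, 1] F" "unambiguous sc A [2 * t, 2 * t] t i F C"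
      and xv: "x = log (real (card A)) (real (card C)) / real i"
      using x unfolding X_def by blast
    have u1: "unambiguous A1 A [2 * t, 2 * t] t i F C" using F(2) sc_A1 by blast
    have up: "finite C \<and> card C \<le> card A ^ i" using upper[OF F(1) u1 fin] .
    have "C \<noteq> {}" using u1 unfolding unambiguous_def by blast
    then have pos: "0 < card C" using up by auto
    have "log (real (card A)) (real (card C)) \<le> log (real (card A)) (real (card A ^ i))"
    proof (subst log_le_cancel_iff[OF b])
      show "0 < real (card C)" using pos by simp
      show "0 < real (card A ^ i)" using b by simp
      show "real (card C) \<le> real (card A ^ i)" using up by (simp only: of_nat_le_iff)
    qed
    then have "x \<le> log (real (card A)) (real (card A ^ i)) / real i"
      unfolding xv by (rule divide_right_mono) simp
    then show ?thesis using val by simp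
  qed
  have "Sup X = 1" by (rule cSup_eq_maximum[OF one le])
  then show ?thesis unfolding capacity_def X_def .
qed

theorem proposition4p7:
  fixes A :: "'a set" and t i :: nat
  assumes "t \<ge> 1" and "finite A" and "card A \<ge> 2" and "i \<ge> 1"
  shows "capacity A1 A [2 * t, 2 * t] [1, 1] t i = 1 \<and>
         capacity A2 A [2 * t, 2 * t] [1, 1] t i = 1"
  using cap_one[OF assms] by blast

end
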